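(* Let $q$ be an odd prime power, $a\in\mathbb{F}_q^*$ a non-square, $\beta\in\mathbb{F}_{q^2}$ with $\beta^2=a$, and for $c\in\mathbb{F}_q^*$ let $f_c(X)=X(X^{q-1}-c)^{q+1}$ as a map $\mathbb{F}_{q^2}\to\mathbb{F}_{q^2}$. Then the map $\varphi:\mathbb{F}_{q^2}\to\mathbb{F}_{q^2}$, $\varphi(x+y\beta)=y+x\beta^{-1}$ ($x,y\in\mathbb{F}_q$), is a bijection satisfying $\varphi\circ f_c=f_{-c}\circ\varphi$; consequently the functional graphs $\mathcal{G}(f_c)$ and $\mathcal{G}(f_{-c})$ are isomorphic.
   Context: The functional graph $\mathcal{G}(f)$ of $f:\mathbb{F}_{q^2}\to\mathbb{F}_{q^2}$ is the directed graph with vertex set $\mathbb{F}_{q^2}$ and edges $\langle x,f(x)\rangle$. *)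

theory Defs
  imports "HOL-Computational_Algebra.Primes"
begin

text \<open>The subfield F_q of a field K with q^2 elements: the fixed points of x |-> x^q.\<close>
definition subF :: "nat \<Rightarrow> 'a::field set" where
  "subF q = {x. x ^ q = x}"

definition fc :: "nat \<Rightarrow> 'a::field \<Rightarrow> 'a \<Rightarrow> 'a" where
  "fc q c X = X * (X ^ (q - 1) - c) ^ (q + 1)"

definition phi :: "nat \<Rightarrow> 'a::field \<Rightarrow> 'a \<Rightarrow> 'a" where
  "phi q \<beta> z = (THE w. \<exists>x\<in>subF q. \<exists>y\<in>subF q. z = x + y * \<beta> \<and> w = y + x * inverse \<beta>)"

text \<open>Isomorphism of functional graphs G(f), G(g): a bijection of vertex sets
  mapping edges <x, f x> exactly onto edges <u, g u>.\<close>
definition fg_iso :: "('a \<Rightarrow> 'a) \<Rightarrow> ('a \<Rightarrow> 'a) \<Rightarrow> bool" where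
  "fg_iso f g \<longleftrightarrow> (\<exists>h. bij h \<and> (\<forall>x y. y = f x \<longleftrightarrow> h y = g (h x)))"

end

theory Submission
  imports Defs "HOL-Number_Theory.Residues"
begin

lemma fermat_ff:
  fixes x :: "'a::{finite,field}"
  shows   "x ^ card (UNIV :: 'a set) = x"
proof (cases "x = 0")
  case False
  have "x * (\<Prod>y\<in>UNIV-{0}. x * y) = x * x ^ (card (UNIV :: 'a set) - 1) * \<Prod>(UNIV-{0})"
    by (simp add: prod.distrib mult_ac)
  also have "x * x ^ (card (UNIV :: 'a set) - 1) = x ^ Suc (card (UNIV :: 'a set) - 1)"
    by (subst power_Suc) auto
  also have "Suc (card (UNIV :: 'a set) - 1) = card (UNIV :: 'a set)"
    using finite_UNIV_card_ge_0[where ?'a = 'a] by simp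
  also have "(\<Prod>y\<in>UNIV-{0}. x * y) = (\<Prod>y\<in>UNIV-{0}. y)"
    by (rule prod.reindex_bij_witness[of _ "\<lambda>y. y / x" "\<lambda>y. x * y"]) (use False in auto)
  finally show ?thesis
    by simp
qed (use finite_UNIV_card_ge_0[where ?'a = 'a] in auto)

lemma char_is_p:
  fixes p k :: nat
  assumes "prime p" "card (UNIV :: 'a::{finite,field} set) = p ^ k"
  shows "CHAR('a) = p"
proof -
  have pos: "CHAR('a) > 0" by (simp add: finite_imp_CHAR_pos)
  have pr: "prime CHAR('a)" using pos prime_CHAR_semidom by blast
  have "CHAR('a) dvd p ^ k" using CHAR_dvd_CARD[where 'a='a] assms(2) by simp
  then have "CHAR('a) dvd p" using pr prime_dvd_power by blast
  then show ?thesis using pr assms(1) by (simp add: primes_dvd_imp_eq)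
qed

theorem mainTheorem4:
  fixes q :: nat and a \<beta> c :: "'a::{finite,field}"
  assumes "\<exists>p k. prime p \<and> k > 0 \<and> q = p ^ k"
    and "odd q"
    and "card (UNIV :: 'a set) = q ^ 2"
    and "a \<in> subF q" and "a \<noteq> 0"
    and "\<not> (\<exists>b\<in>subF q. b ^ 2 = a)"
    and "\<beta> ^ 2 = a"
    and "c \<in> subF q" and "c \<noteq> 0"
  shows "(\<forall>x\<in>subF q. \<forall>y\<in>subF q. phi q \<beta> (x + y * \<beta>) = y + x * inverse \<beta>)
    \<and> bij (phi q \<beta>)
    \<and> phi q \<beta> \<circ> fc q c = fc q (- c) \<circ> phi q \<beta>
    \<and> fg_iso (fc q c) (fc q (- c))"
proof -
  obtain p k where pk: "prime p" "k > 0" "q = p ^ k" using assms(1) by blast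
  have card: "card (UNIV :: 'a set) = p ^ (2*k)" using assms(3) pk by (simp add: power_mult mult.commute)
  have ch: "CHAR('a) = p" using char_is_p[OF pk(1) card] .
  have frob: "\<And>x y::'a. (x + y) ^ q = x ^ q + y ^ q"
    using freshmans_dream'[where 'a='a, of q k] ch pk by simp
  have fermat: "\<And>x::'a. (x ^ q) ^ q = x"
    using fermat_ff assms(3) by (metis power_mult power2_eq_square)
  have q1: "q \<ge> 1" using assms(2) by (cases q) auto
  have oddp: "odd p" using assms(2) pk by simp
  have two: "(2::'a) \<noteq> 0"
  proof
    assume h: "(2::'a) = 0"
    obtain m where "p = 2*m+1" using oddp oddE by blast
    then have "(of_nat p::'a) = 2 * of_nat m + 1" by simp
    moreover have "(of_nat p::'a) = 0" using ch by (metis of_nat_CHAR)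
    ultimately show False using h by simp
  qed
  have two_q: "(2::'a) ^ q = 2" using frob[of 1 1] by simp
  have minus_q: "\<And>x::'a. (- x) ^ q = - (x ^ q)"
    using assms(2) by simp
  have b0: "\<beta> \<noteq> 0" using assms(5,7) by auto
  have aq: "a ^ q = a" using assms(4) by (simp add: subF_def)
  have bq: "\<beta> ^ q = - \<beta>"
  proof -
    have "(\<beta> ^ q) ^ 2 = \<beta> ^ 2"
      using aq assms(7) by (metis power_mult mult.commute)
    then have "(\<beta> ^ q - \<beta>) * (\<beta> ^ q + \<beta>) = 0" by (simp add: algebra_simps power2_eq_square)
    moreover have "\<beta> ^ q \<noteq> \<beta>" using assms(6,7) by (auto simp: subF_def)
    ultimately show ?thesis by (simp add: eq_neg_iff_add_eq_0)
  qed
  have phi_eq: "\<And>z. phi q \<beta> z = z / \<beta>"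
  proof -
    fix z :: 'a
    define x where "x = (z + z ^ q) / 2"
    define y where "y = (z - z ^ q) / (2 * \<beta>)"
    have xs: "x \<in> subF q" unfolding subF_def x_def
      by (simp add: power_divide frob two_q fermat add.commute)
    have ys: "y \<in> subF q" unfolding subF_def y_def
    proof -
      have "(z - z ^ q) ^ q = z ^ q - z"
        using frob[of z "- (z^q)"] by (simp add: fermat minus_q)
      then have "((z - z ^ q) / (2 * \<beta>)) ^ q = (z ^ q - z) / (- (2 * \<beta>))"
        by (simp add: power_divide power_mult_distrib two_q bq)
      also have "\<dots> = (z - z ^ q) / (2 * \<beta>)"
        by (metis minus_diff_eq divide_minus_left divide_minus_right minus_minus)
      finally show "((z - z ^ q) / (2 * \<beta>)) \<in> {x. x ^ q = x}" by simp
    qed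
    have four: "(4::'a) \<noteq> 0" using two by (metis mult_2 numeral_Bit0 no_zero_divisors mult_2_right)
    have zd: "z = x + y * \<beta>" unfolding x_def y_def using b0 two four
      by (simp add: field_simps)
    show "phi q \<beta> z = z / \<beta>"
      unfolding phi_def
    proof (rule the_equality)
      show "\<exists>x\<in>subF q. \<exists>y\<in>subF q. z = x + y * \<beta> \<and> z / \<beta> = y + x * inverse \<beta>"
        using xs ys zd b0 by (intro bexI[OF _ xs] bexI[OF _ ys]) (auto simp: field_simps)
    next
      fix w assume "\<exists>x\<in>subF q. \<exists>y\<in>subF q. z = x + y * \<beta> \<and> w = y + x * inverse \<beta>"
      then show "w = z / \<beta>" using b0 by (auto simp: field_simps)
    qed
  qed
  have P1: "\<forall>x\<in>subF q. \<forall>y\<in>subF q. phi q \<beta> (x + y * \<beta>) = y + x * inverse \<beta>"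
    using b0 by (simp add: phi_eq field_simps)
  have P2: "bij (phi q \<beta>)"
    unfolding bij_def inj_def surj_def phi_eq using b0
    by (auto simp: field_simps intro!: exI[where x="_ * \<beta>"])
  have bq1: "\<beta> ^ (q - 1) = -1"
  proof -
    have "\<beta> ^ (q - 1) * \<beta> = \<beta> ^ q" using q1 by (metis Suc_diff_le diff_Suc_1 power_Suc2)
    then show ?thesis using bq b0 by (metis minus_mult_left mult_cancel_right mult_1 )
  qed
  have evq: "even (q + 1)" using assms(2) by simp
  have P3: "phi q \<beta> \<circ> fc q c = fc q (- c) \<circ> phi q \<beta>"
  proof
    fix z
    have "(z / \<beta>) ^ (q - 1) + c = - (z ^ (q - 1) - c)"
      using bq1 by (simp add: power_divide)
    then have "((z / \<beta>) ^ (q - 1) + c) ^ (q + 1) = (z ^ (q - 1) - c) ^ (q + 1)"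
      using evq by (metis power_minus_even)
    then show "(phi q \<beta> \<circ> fc q c) z = (fc q (- c) \<circ> phi q \<beta>) z"
      by (simp add: phi_eq fc_def)
  qed
  have P4: "fg_iso (fc q c) (fc q (- c))"
    unfolding fg_iso_def
  proof (intro exI conjI allI)
    show "bij (phi q \<beta>)" by (rule P2)
    fix x y
    have "fc q (- c) (phi q \<beta> x) = phi q \<beta> (fc q c x)" using P3 by (metis comp_apply)
    then show "y = fc q c x \<longleftrightarrow> phi q \<beta> y = fc q (- c) (phi q \<beta> x)"
      using b0 by (auto simp: phi_eq)
  qed
  show ?thesis using P1 P2 P3 P4 by blast
qed

end
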